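(* There is no final $F$-coalgebra in $\mathbf{Met_3}^{L}$.
   Context: A tripointed metric space is a set with three distinct points $T,L,R$ and a metric bounded by $1$ in which $T,L,R$ have pairwise distance $1$. $\mathbf{Met_3}^{L}$: tripointed metric spaces with Lipschitz maps preserving $T,L,R$. Let $M=\{a,b,c\}$. For a tripointed metric space $X$, $M\times X$ has metric $d((m,x),(n,y))=\tfrac12d(x,y)$ if $m=n$ and $1$ otherwise; $M\otimes X$ is the quotient metric space by the equivalence relation generated by $(b,T)\sim(a,L)$, $(a,R)\sim(c,T)$, $(c,L)\sim(b,R)$, with elements $m\otimes x$ and distinguished points $a\otimes T,b\otimes L,c\otimes R$; $F=M\otimes-$ with $(M\otimes f)(m\otimes x)=m\otimes f(x)$. A coalgebra is $(X,e\colon X\to FX)$ with $e$ a morphism; a coalgebra morphism $h\colon(A,\alpha)\to(B,\beta)$ satisfies $\beta\circ h=Fh\circ\alpha$; a coalgebra is final if every coalgebra has a unique coalgebra morphism into it. *)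

theory Defs
  imports Complex_Main
begin

datatype m3 = Ma | Mb | Mc

record 'a tpms =
  tcarrier :: "'a set"
  tdist :: "'a \<Rightarrow> 'a \<Rightarrow> real"
  pT :: 'a
  pL :: 'a
  pR :: 'a

definition is_tpms :: "'a tpms \<Rightarrow> bool" where
  "is_tpms X \<longleftrightarrow>
     pT X \<in> tcarrier X \<and> pL X \<in> tcarrier X \<and> pR X \<in> tcarrier X \<and>
     pT X \<noteq> pL X \<and> pL X \<noteq> pR X \<and> pT X \<noteq> pR X \<and>
     (\<forall>x\<in>tcarrier X. \<forall>y\<in>tcarrier X.
        0 \<le> tdist X x y \<and> tdist X x y \<le> 1 \<and>
        (tdist X x y = 0 \<longleftrightarrow> x = y) \<and> tdist X x y = tdist X y x) \<and>
     (\<forall>x\<in>tcarrier X. \<forall>y\<in>tcarrier X. \<forall>z\<in>tcarrier X.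
        tdist X x z \<le> tdist X x y + tdist X y z) \<and>
     tdist X (pT X) (pL X) = 1 \<and> tdist X (pL X) (pR X) = 1 \<and> tdist X (pT X) (pR X) = 1"

definition lip_morph :: "'a tpms \<Rightarrow> 'b tpms \<Rightarrow> ('a \<Rightarrow> 'b) \<Rightarrow> bool" where
  "lip_morph X Y f \<longleftrightarrow>
     f ` tcarrier X \<subseteq> tcarrier Y \<and>
     f (pT X) = pT Y \<and> f (pL X) = pL Y \<and> f (pR X) = pR Y \<and>
     (\<exists>K. \<forall>x\<in>tcarrier X. \<forall>y\<in>tcarrier X. tdist Y (f x) (f y) \<le> K * tdist X x y)"

definition prod_carrier :: "'a tpms \<Rightarrow> (m3 \<times> 'a) set" where
  "prod_carrier X = UNIV \<times> tcarrier X"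

definition prod_dist :: "'a tpms \<Rightarrow> (m3 \<times> 'a) \<Rightarrow> (m3 \<times> 'a) \<Rightarrow> real" where
  "prod_dist X p q = (if fst p = fst q then tdist X (snd p) (snd q) / 2 else 1)"

definition glue :: "'a tpms \<Rightarrow> ((m3 \<times> 'a) \<times> (m3 \<times> 'a)) set" where
  "glue X = {((Mb, pT X), (Ma, pL X)), ((Ma, pR X), (Mc, pT X)), ((Mc, pL X), (Mb, pR X))}"

definition glue_eq :: "'a tpms \<Rightarrow> ((m3 \<times> 'a) \<times> (m3 \<times> 'a)) set" where
  "glue_eq X = Id_on (prod_carrier X) \<union> (glue X \<union> (glue X)\<inverse>)\<^sup>+"

definition quot_dist ::
  "('b \<Rightarrow> 'b \<Rightarrow> real) \<Rightarrow> ('b \<times> 'b) set \<Rightarrow> 'b set \<Rightarrow> 'b set \<Rightarrow> 'b set \<Rightarrow> real" where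
  "quot_dist d E P A B = Inf {sum_list (map (\<lambda>(p, q). d p q) cs) | cs.
      cs \<noteq> [] \<and> set cs \<subseteq> P \<times> P \<and> fst (hd cs) \<in> A \<and> snd (last cs) \<in> B \<and>
      (\<forall>i. i + 1 < length cs \<longrightarrow> (snd (cs ! i), fst (cs ! (i + 1))) \<in> E)}"

text \<open>The object part of the functor F = M \<otimes> -; elements m \<otimes> x are equivalence classes.\<close>
definition tens :: "'a tpms \<Rightarrow> m3 \<Rightarrow> 'a \<Rightarrow> (m3 \<times> 'a) set" where
  "tens X m x = glue_eq X `` {(m, x)}"

definition Fobj :: "'a tpms \<Rightarrow> (m3 \<times> 'a) set tpms" where
  "Fobj X = \<lparr> tcarrier = prod_carrier X // glue_eq X,
             tdist = quot_dist (prod_dist X) (glue_eq X) (prod_carrier X),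
             pT = tens X Ma (pT X), pL = tens X Mb (pL X), pR = tens X Mc (pR X) \<rparr>"

text \<open>The arrow part: (M \<otimes> f)(m \<otimes> x) = m \<otimes> f x (f : X \<rightarrow> Y).\<close>
definition Fmap :: "'b tpms \<Rightarrow> ('a \<Rightarrow> 'b) \<Rightarrow> (m3 \<times> 'a) set \<Rightarrow> (m3 \<times> 'b) set" where
  "Fmap Y f C = glue_eq Y `` (map_prod id f ` C)"

definition coalg :: "'a tpms \<Rightarrow> ('a \<Rightarrow> (m3 \<times> 'a) set) \<Rightarrow> bool" where
  "coalg X e \<longleftrightarrow> is_tpms X \<and> lip_morph X (Fobj X) e"

definition coalg_morph ::
  "'a tpms \<Rightarrow> ('a \<Rightarrow> (m3 \<times> 'a) set) \<Rightarrow> 'b tpms \<Rightarrow> ('b \<Rightarrow> (m3 \<times> 'b) set) \<Rightarrow> ('a \<Rightarrow> 'b) \<Rightarrow> bool"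
  where
  "coalg_morph A \<alpha> B \<beta> h \<longleftrightarrow>
     lip_morph A B h \<and> (\<forall>x\<in>tcarrier A. \<beta> (h x) = Fmap B h (\<alpha> x))"

text \<open>Finality of (X,e) with respect to all coalgebras whose carrier lives in type 'c
  (uniqueness of morphisms is up to equality on the carrier).\<close>
definition final_for :: "'c itself \<Rightarrow> 'a tpms \<Rightarrow> ('a \<Rightarrow> (m3 \<times> 'a) set) \<Rightarrow> bool" where
  "final_for (_ :: 'c itself) X e \<longleftrightarrow> coalg X e \<and>
     (\<forall>(A :: 'c tpms) \<alpha>. coalg A \<alpha> \<longrightarrow>
        (\<exists>h. coalg_morph A \<alpha> X e h \<and>
             (\<forall>h'. coalg_morph A \<alpha> X e h' \<longrightarrow> (\<forall>x\<in>tcarrier A. h' x = h x))))"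

end

theory Submission
  imports Defs
begin


definition phi :: "'a tpms \<Rightarrow> (m3 \<times> 'a) \<Rightarrow> real" where
  "phi X p = (if fst p = Ma then tdist X (snd p) (pT X) / 2 else 1/2)"

lemma tpms_facts:
  assumes "is_tpms X"
  shows "pT X \<in> tcarrier X" "pL X \<in> tcarrier X" "pR X \<in> tcarrier X"
    "tdist X (pL X) (pT X) = 1" "tdist X (pR X) (pT X) = 1" "tdist X (pT X) (pT X) = 0"
    "\<And>x y. x \<in> tcarrier X \<Longrightarrow> y \<in> tcarrier X \<Longrightarrow> 0 \<le> tdist X x y"
    "\<And>x y. x \<in> tcarrier X \<Longrightarrow> y \<in> tcarrier X \<Longrightarrow> tdist X x y \<le> 1"
    "\<And>x y. x \<in> tcarrier X \<Longrightarrow> y \<in> tcarrier X \<Longrightarrow> tdist X x y = tdist X y x"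
    "\<And>x. x \<in> tcarrier X \<Longrightarrow> tdist X x x = 0"
    "\<And>x y z. x \<in> tcarrier X \<Longrightarrow> y \<in> tcarrier X \<Longrightarrow> z \<in> tcarrier X \<Longrightarrow>
        tdist X x z \<le> tdist X x y + tdist X y z"
  using assms unfolding is_tpms_def by metis+

lemma phi_glue:
  assumes X: "is_tpms X" and pq: "(p, q) \<in> glue_eq X"
  shows "phi X p = phi X q"
proof -
  note f = tpms_facts[OF X]
  from pq consider "(p, q) \<in> Id_on (prod_carrier X)" | "(p, q) \<in> (glue X \<union> (glue X)\<inverse>)\<^sup>+"
    unfolding glue_eq_def by blast
  then show ?thesis
  proof cases
    case 1 then show ?thesis by auto
  next
    case 2 then show ?thesis
    proof (induction rule: trancl_induct)
      case (base y) then show ?case using f unfolding glue_def phi_def by auto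
    next
      case (step y z) then show ?case using f unfolding glue_def phi_def by auto
    qed
  qed
qed

lemma phi_lip:
  assumes X: "is_tpms X" and p: "p \<in> prod_carrier X" and q: "q \<in> prod_carrier X"
  shows "phi X p - phi X q \<le> prod_dist X p q"
proof -
  note f = tpms_facts[OF X]
  obtain m y m' y' where pp: "p = (m, y)" "q = (m', y')" by fastforce
  have y: "y \<in> tcarrier X" and y': "y' \<in> tcarrier X" using p q pp unfolding prod_carrier_def by auto
  have t: "tdist X y (pT X) \<le> tdist X y y' + tdist X y' (pT X)" using f(11)[OF y y' f(1)] .
  show ?thesis using t f(7)[OF y y'] f(7)[OF y f(1)] f(7)[OF y' f(1)] f(8)[OF y f(1)] f(8)[OF y' f(1)]
    unfolding pp phi_def prod_dist_def by auto
qed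

lemma chain_bound:
  assumes X: "is_tpms X"
  shows "cs \<noteq> [] \<Longrightarrow> set cs \<subseteq> prod_carrier X \<times> prod_carrier X \<Longrightarrow>
    (\<forall>i. i + 1 < length cs \<longrightarrow> (snd (cs ! i), fst (cs ! (i + 1))) \<in> glue_eq X) \<Longrightarrow>
    phi X (fst (hd cs)) - phi X (snd (last cs)) \<le> sum_list (map (\<lambda>(p, q). prod_dist X p q) cs)"
proof (induction cs)
  case Nil then show ?case by simp
next
  case (Cons c cs)
  obtain p q where c: "c = (p, q)" by (cases c) auto
  have pq: "p \<in> prod_carrier X" "q \<in> prod_carrier X" using Cons.prems(2) c by auto
  have l1: "phi X p - phi X q \<le> prod_dist X p q" using phi_lip[OF X pq] .
  show ?case
  proof (cases "cs = []")
    case True then show ?thesis using l1 c by simp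
  next
    case False
    have link: "(q, fst (hd cs)) \<in> glue_eq X"
      using Cons.prems(3)[rule_format, of 0] False c by (simp add: hd_conv_nth)
    have IH: "phi X (fst (hd cs)) - phi X (snd (last cs)) \<le> sum_list (map (\<lambda>(p, q). prod_dist X p q) cs)"
    proof (rule Cons.IH[OF False])
      show "set cs \<subseteq> prod_carrier X \<times> prod_carrier X" using Cons.prems(2) by auto
      show "\<forall>i. i + 1 < length cs \<longrightarrow> (snd (cs ! i), fst (cs ! (i + 1))) \<in> glue_eq X"
      proof (intro allI impI)
        fix i assume "i + 1 < length cs"
        then show "(snd (cs ! i), fst (cs ! (i + 1))) \<in> glue_eq X"
          using Cons.prems(3)[rule_format, of "Suc i"] by simp
      qed
    qed
    have "phi X q = phi X (fst (hd cs))" using phi_glue[OF X link] .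
    then show ?thesis using IH l1 c False by simp
  qed
qed

lemma refl_glue: "p \<in> prod_carrier X \<Longrightarrow> (p, p) \<in> glue_eq X"
  unfolding glue_eq_def by (auto intro: Id_onI)


lemma lower:
  assumes X: "is_tpms X" and y: "y \<in> tcarrier X" and p: "p \<in> prod_carrier X"
    and yin: "(Ma, y) \<in> glue_eq X `` {p}"
  shows "tdist X y (pT X) / 2 \<le> quot_dist (prod_dist X) (glue_eq X) (prod_carrier X) (glue_eq X `` {p}) (tens X Ma (pT X))"
proof -
  note f = tpms_facts[OF X]
  have yc: "(Ma, y) \<in> prod_carrier X" "(Ma, pT X) \<in> prod_carrier X" using y f(1) unfolding prod_carrier_def by auto
  have phy: "phi X p = tdist X y (pT X) / 2"
    using phi_glue[OF X, of p "(Ma,y)"] yin unfolding phi_def by auto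
  have ne: "[((Ma, y), (Ma, pT X))] \<noteq> [] \<and> set [((Ma, y), (Ma, pT X))] \<subseteq> prod_carrier X \<times> prod_carrier X \<and>
     fst (hd [((Ma, y), (Ma, pT X))]) \<in> glue_eq X `` {p} \<and> snd (last [((Ma, y), (Ma, pT X))]) \<in> tens X Ma (pT X) \<and>
     (\<forall>i. i + 1 < length [((Ma, y), (Ma, pT X))] \<longrightarrow> (snd ([((Ma, y), (Ma, pT X))] ! i), fst ([((Ma, y), (Ma, pT X))] ! (i + 1))) \<in> glue_eq X)"
    using yc yin refl_glue[OF yc(2)] unfolding tens_def by auto
  show ?thesis unfolding quot_dist_def
  proof (rule cInf_greatest)
    show "{sum_list (map (\<lambda>(p, q). prod_dist X p q) cs) |cs.
        cs \<noteq> [] \<and> set cs \<subseteq> prod_carrier X \<times> prod_carrier X \<and> fst (hd cs) \<in> glue_eq X `` {p} \<and>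
        snd (last cs) \<in> tens X Ma (pT X) \<and> (\<forall>i. i + 1 < length cs \<longrightarrow> (snd (cs ! i), fst (cs ! (i + 1))) \<in> glue_eq X)} \<noteq> {}"
      using ne by blast
  next
    fix s assume "s \<in> {sum_list (map (\<lambda>(p, q). prod_dist X p q) cs) |cs.
        cs \<noteq> [] \<and> set cs \<subseteq> prod_carrier X \<times> prod_carrier X \<and> fst (hd cs) \<in> glue_eq X `` {p} \<and>
        snd (last cs) \<in> tens X Ma (pT X) \<and> (\<forall>i. i + 1 < length cs \<longrightarrow> (snd (cs ! i), fst (cs ! (i + 1))) \<in> glue_eq X)}"
    then obtain cs where s: "s = sum_list (map (\<lambda>(p, q). prod_dist X p q) cs)" and
      cs: "cs \<noteq> []" "set cs \<subseteq> prod_carrier X \<times> prod_carrier X" "fst (hd cs) \<in> glue_eq X `` {p}"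
        "snd (last cs) \<in> tens X Ma (pT X)" "\<forall>i. i + 1 < length cs \<longrightarrow> (snd (cs ! i), fst (cs ! (i + 1))) \<in> glue_eq X"
      by blast
    have cb: "phi X (fst (hd cs)) - phi X (snd (last cs)) \<le> s" using chain_bound[OF X cs(1,2,5)] s by simp
    have "phi X (fst (hd cs)) = phi X p" using phi_glue[OF X, of p "fst (hd cs)"] cs(3) by auto
    moreover have "phi X (snd (last cs)) = phi X (Ma, pT X)"
      using phi_glue[OF X, of "(Ma, pT X)" "snd (last cs)"] cs(4) unfolding tens_def by auto
    moreover have "phi X (Ma, pT X) = 0" using f(6) unfolding phi_def by simp
    ultimately show "tdist X y (pT X) / 2 \<le> s" using cb phy by simp
  qed
qed

lemma upper:
  assumes X: "is_tpms X" and y: "y \<in> tcarrier X" and y': "y' \<in> tcarrier X"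
  shows "quot_dist (prod_dist X) (glue_eq X) (prod_carrier X) (tens X m y) (tens X m' y') \<le> prod_dist X (m, y) (m', y')"
proof -
  note f = tpms_facts[OF X]
  have yc: "(m, y) \<in> prod_carrier X" "(m', y') \<in> prod_carrier X" using y y' unfolding prod_carrier_def by auto
  let ?S = "{sum_list (map (\<lambda>(p, q). prod_dist X p q) cs) |cs.
        cs \<noteq> [] \<and> set cs \<subseteq> prod_carrier X \<times> prod_carrier X \<and> fst (hd cs) \<in> tens X m y \<and>
        snd (last cs) \<in> tens X m' y' \<and> (\<forall>i. i + 1 < length cs \<longrightarrow> (snd (cs ! i), fst (cs ! (i + 1))) \<in> glue_eq X)}"
  have nn: "\<And>p q. p \<in> prod_carrier X \<Longrightarrow> q \<in> prod_carrier X \<Longrightarrow> 0 \<le> prod_dist X p q"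
    using f(7) unfolding prod_dist_def prod_carrier_def by auto
  have mem: "prod_dist X (m, y) (m', y') \<in> ?S"
  proof -
    have "[((m, y), (m', y'))] \<noteq> [] \<and> set [((m, y), (m', y'))] \<subseteq> prod_carrier X \<times> prod_carrier X \<and>
      fst (hd [((m, y), (m', y'))]) \<in> tens X m y \<and> snd (last [((m, y), (m', y'))]) \<in> tens X m' y' \<and>
      (\<forall>i. i + 1 < length [((m, y), (m', y'))] \<longrightarrow> (snd ([((m, y), (m', y'))] ! i), fst ([((m, y), (m', y'))] ! (i + 1))) \<in> glue_eq X)"
      using yc refl_glue[OF yc(1)] refl_glue[OF yc(2)] unfolding tens_def by auto
    then show ?thesis by force
  qed
  have bdd: "bdd_below ?S"
  proof (rule bdd_belowI)
    fix s assume "s \<in> ?S"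
    then obtain cs where s: "s = sum_list (map (\<lambda>(p, q). prod_dist X p q) cs)"
      and cs: "set cs \<subseteq> prod_carrier X \<times> prod_carrier X" by blast
    show "0 \<le> s" unfolding s
      by (rule sum_list_nonneg) (use cs nn in auto)
  qed
  show ?thesis unfolding quot_dist_def by (rule cInf_lower[OF mem bdd])
qed



definition SS :: "real \<Rightarrow> real set" where "SS r = {0, 2} \<union> range (\<lambda>n. r ^ n)"
definition dd :: "real \<Rightarrow> real \<Rightarrow> real" where
  "dd s t = (if s = t then 0 else if s = 2 \<or> t = 2 then 1 else \<bar>s - t\<bar>)"
definition Atp :: "real \<Rightarrow> ('x + real) tpms" where
  "Atp r = \<lparr>tcarrier = Inr ` SS r,
     tdist = (\<lambda>p q. case (p, q) of (Inr s, Inr t) \<Rightarrow> dd s t | _ \<Rightarrow> 0),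
     pT = Inr 0, pL = Inr 1, pR = Inr 2\<rparr>"
definition Aal :: "real \<Rightarrow> ('x + real) \<Rightarrow> (m3 \<times> ('x + real)) set" where
  "Aal r p = (case p of Inr t \<Rightarrow> if t = 1 then tens (Atp r) Mb (Inr 1)
      else if t = 2 then tens (Atp r) Mc (Inr 2) else tens (Atp r) Ma (Inr (t / r)) | Inl _ \<Rightarrow> {})"

lemma SS_cases:
  assumes r: "0 < r" "r \<le> 1/4" and s: "s \<in> SS r"
  shows "s = 1 \<or> s = 2 \<or> (0 \<le> s \<and> s \<le> r \<and> s / r \<in> SS r)"
proof -
  from s consider "s = 0" | "s = 2" | n where "s = r ^ n" unfolding SS_def by auto
  then show ?thesis
  proof cases
    case 1 then show ?thesis using r by (simp add: SS_def)
  next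
    case 2 then show ?thesis by simp
  next
    case 3
    show ?thesis
    proof (cases n)
      case 0 then show ?thesis using 3 by simp
    next
      case (Suc k)
      have "r ^ k \<le> 1" using r by (simp add: power_le_one)
      then have "r * r ^ k \<le> r" using r by (simp add: mult_left_le)
      moreover have "s / r = r ^ k" using 3 Suc r by simp
      ultimately show ?thesis using 3 Suc r unfolding SS_def by auto
    qed
  qed
qed

lemma SS_range:
  assumes r: "0 < r" "r \<le> 1/4" and s: "s \<in> SS r"
  shows "(0 \<le> s \<and> s \<le> 1) \<or> s = 2"
  using SS_cases[OF r s] r by auto

lemma dd_props:
  assumes "(0 \<le> s \<and> s \<le> 1) \<or> s = 2" "(0 \<le> t \<and> t \<le> 1) \<or> t = 2" "(0 \<le> u \<and> u \<le> 1) \<or> u = 2"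
  shows "0 \<le> dd s t" "dd s t \<le> 1" "dd s t = 0 \<longleftrightarrow> s = t" "dd s t = dd t s" "dd s u \<le> dd s t + dd t u"
  unfolding dd_def
  subgoal using assms by (smt (verit))
  subgoal using assms by (smt (verit))
  subgoal using assms by (smt (verit))
  subgoal using assms by (smt (verit))
  subgoal using assms by (smt (verit))
  done

lemma Atp_tpms:
  assumes r: "0 < r" "r \<le> 1/4"
  shows "is_tpms (Atp r)"
proof -
  have S: "0 \<in> SS r" "1 \<in> SS r" "2 \<in> SS r" unfolding SS_def by (auto intro: range_eqI[of _ _ 0])
  have R: "\<And>s. s \<in> SS r \<Longrightarrow> (0 \<le> s \<and> s \<le> 1) \<or> s = 2" using SS_range[OF r] by blast
  have P: "0 \<le> dd x y \<and> dd x y \<le> 1 \<and> (dd x y = 0 \<longleftrightarrow> x = y) \<and> dd x y = dd y x"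
    if "x \<in> SS r" "y \<in> SS r" for x y
    using dd_props(1-4)[OF R[OF that(1)] R[OF that(2)] R[OF that(1)]] by simp
  have Q: "dd x z \<le> dd x y + dd y z" if "x \<in> SS r" "y \<in> SS r" "z \<in> SS r" for x y z
    using dd_props(5)[OF R[OF that(1)] R[OF that(2)] R[OF that(3)]] by simp
  have D: "dd 0 1 = 1" "dd 1 2 = 1" "dd 0 2 = 1" unfolding dd_def by auto
  show ?thesis unfolding is_tpms_def Atp_def using S P Q D by auto
qed


lemma Aal_form:
  assumes r: "0 < r" "r \<le> 1/4" and s: "s \<in> SS r"
  shows "\<exists>m y. y \<in> SS r \<and> Aal r (Inr s) = tens (Atp r) m (Inr y) \<and>
     (s \<noteq> 1 \<and> s \<noteq> 2 \<longrightarrow> m = Ma \<and> y = s / r \<and> 0 \<le> s \<and> s \<le> r)"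
proof -
  have S: "1 \<in> SS r" "2 \<in> SS r" unfolding SS_def by (auto intro: range_eqI[of _ _ 0])
  from SS_cases[OF r s] consider "s = 1" | "s = 2" | "s \<noteq> 1" "s \<noteq> 2" "0 \<le> s" "s \<le> r" "s / r \<in> SS r" by blast
  then show ?thesis
  proof cases
    case 1 then show ?thesis using S by (intro exI[of _ Mb] exI[of _ 1]) (simp add: Aal_def)
  next
    case 2 then show ?thesis using S by (intro exI[of _ Mc] exI[of _ 2]) (simp add: Aal_def)
  next
    case 3 then show ?thesis by (intro exI[of _ Ma] exI[of _ "s / r"]) (simp add: Aal_def)
  qed
qed

lemma Atp_dist: "tdist (Atp r) (Inr s) (Inr t) = dd s t"
  by (simp add: Atp_def)

lemma Atp_carrier: "tcarrier (Atp r) = Inr ` SS r"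
  by (simp add: Atp_def)

lemma Aal_lip:
  assumes r: "0 < r" "r \<le> 1/4" and s: "s \<in> SS r" and t: "t \<in> SS r"
  shows "tdist (Fobj (Atp r :: ('x + real) tpms)) (Aal r (Inr s)) (Aal r (Inr t)) \<le> (1 / r) * dd s t"
proof -
  let ?A = "Atp r :: ('x + real) tpms"
  have X: "is_tpms ?A" using Atp_tpms[OF r] .
  note f = tpms_facts[OF X]
  have td: "tdist (Fobj ?A) = quot_dist (prod_dist ?A) (glue_eq ?A) (prod_carrier ?A)"
    by (simp add: Fobj_def)
  have R: "\<And>s. s \<in> SS r \<Longrightarrow> (0 \<le> s \<and> s \<le> 1) \<or> s = 2" using SS_range[OF r] by blast
  obtain m y where my: "y \<in> SS r" "Aal r (Inr s) = tens ?A m (Inr y)"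
    "s \<noteq> 1 \<and> s \<noteq> 2 \<longrightarrow> m = Ma \<and> y = s / r \<and> 0 \<le> s \<and> s \<le> r"
    using Aal_form[OF r s] by blast
  obtain m' y' where my': "y' \<in> SS r" "Aal r (Inr t) = tens ?A m' (Inr y')"
    "t \<noteq> 1 \<and> t \<noteq> 2 \<longrightarrow> m' = Ma \<and> y' = t / r \<and> 0 \<le> t \<and> t \<le> r"
    using Aal_form[OF r t] by blast
  have yc: "Inr y \<in> tcarrier ?A" "Inr y' \<in> tcarrier ?A" using my(1) my'(1) by (auto simp: Atp_carrier)
  have ddst: "0 \<le> dd s t" using dd_props(1)[OF R[OF s] R[OF t] R[OF t]] .
  show ?thesis
  proof (cases "s = t")
    case True
    have a: "Aal r (Inr t) = tens ?A m (Inr y)" using True my(2) by metis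
    have "tdist (Fobj ?A) (Aal r (Inr s)) (Aal r (Inr t)) \<le> prod_dist ?A (m, Inr y) (m, Inr y)"
      unfolding td True a by (rule upper[OF X yc(1) yc(1)])
    also have "\<dots> = 0" using f(10)[OF yc(1)] by (simp add: prod_dist_def)
    finally have le0: "tdist (Fobj ?A) (Aal r (Inr s)) (Aal r (Inr t)) \<le> 0" .
    have "0 \<le> (1 / r) * dd s t" using ddst r by simp
    then show ?thesis using le0 by linarith
  next
    case False
    have U: "tdist (Fobj ?A) (Aal r (Inr s)) (Aal r (Inr t)) \<le> prod_dist ?A (m, Inr y) (m', Inr y')"
      unfolding td using upper[OF X yc(1) yc(2)] my(2) my'(2) by simp
    show ?thesis
    proof (cases "s \<noteq> 1 \<and> s \<noteq> 2 \<and> t \<noteq> 1 \<and> t \<noteq> 2")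
      case True
      then have mm: "m = Ma" "y = s / r" "0 \<le> s" "s \<le> r" "m' = Ma" "y' = t / r" "0 \<le> t" "t \<le> r"
        using my(3) my'(3) by auto
      have y1: "y \<le> 1" "y' \<le> 1" using mm r by (auto simp: divide_le_eq)
      have yne: "y \<noteq> y'" using mm False r by auto
      have y2: "s / r \<noteq> 2" "t / r \<noteq> 2" using y1 mm by auto
      have "prod_dist ?A (m, Inr y) (m', Inr y') = \<bar>s / r - t / r\<bar> / 2"
        using mm y2 yne by (simp add: prod_dist_def Atp_dist dd_def)
      also have "\<dots> = \<bar>s - t\<bar> / (2 * r)" using r by (simp add: diff_divide_distrib[symmetric] abs_divide)
      also have "\<dots> \<le> \<bar>s - t\<bar> / r" using r by (simp add: frac_le)
      also have "\<dots> = (1 / r) * dd s t" using True False by (simp add: dd_def)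
      finally show ?thesis using U by simp
    next
      case False2: False
      have half: "1/2 \<le> dd s t"
      proof -
        have "s = 2 \<or> t = 2 \<or> (s = 1 \<and> t \<le> r \<and> 0 \<le> t) \<or> (t = 1 \<and> s \<le> r \<and> 0 \<le> s)"
          using False2 SS_cases[OF r s] SS_cases[OF r t] False by auto
        then show ?thesis using False r unfolding dd_def by auto
      qed
      have "prod_dist ?A (m, Inr y) (m', Inr y') \<le> 1"
        using f(8)[OF yc(1) yc(2)] by (simp add: prod_dist_def)
      also have "1 \<le> (1 / r) * (1/2)" using r by (simp add: field_simps)
      also have "\<dots> \<le> (1 / r) * dd s t" using half r by (intro mult_left_mono) auto
      finally show ?thesis using U by simp
    qed
  qed
qed

lemma Atp_coalg:
  assumes r: "0 < r" "r \<le> 1/4"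
  shows "coalg (Atp r :: ('x + real) tpms) (Aal r)"
proof -
  let ?A = "Atp r :: ('x + real) tpms"
  have X: "is_tpms ?A" using Atp_tpms[OF r] .
  have img: "Aal r ` tcarrier ?A \<subseteq> tcarrier (Fobj ?A)"
  proof
    fix C assume "C \<in> Aal r ` tcarrier ?A"
    then obtain s where s: "s \<in> SS r" "C = Aal r (Inr s)" by (auto simp: Atp_carrier)
    obtain m y where my: "y \<in> SS r" "Aal r (Inr s) = tens ?A m (Inr y)"
      using Aal_form[OF r s(1)] by blast
    have "(m, Inr y) \<in> prod_carrier ?A" using my(1) by (simp add: prod_carrier_def Atp_carrier)
    then show "C \<in> tcarrier (Fobj ?A)"
      using s my unfolding Fobj_def tens_def by (auto intro: quotientI)
  qed
  have pts: "Aal r (pT ?A) = pT (Fobj ?A)" "Aal r (pL ?A) = pL (Fobj ?A)" "Aal r (pR ?A) = pR (Fobj ?A)"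
    by (simp_all add: Aal_def Atp_def Fobj_def)
  have lip: "\<forall>x\<in>tcarrier ?A. \<forall>y\<in>tcarrier ?A. tdist (Fobj ?A) (Aal r x) (Aal r y) \<le> (1 / r) * tdist ?A x y"
    using Aal_lip[OF r] by (auto simp: Atp_carrier Atp_dist)
  show ?thesis unfolding coalg_def lip_morph_def using X img pts lip by blast
qed

theorem mainTheorem12:
  fixes X :: "'a tpms" and e :: "'a \<Rightarrow> (m3 \<times> 'a) set"
  shows "\<not> final_for TYPE('a set + real) X e"
proof
  assume F: "final_for TYPE('a set + real) X e"
  have cX: "coalg X e" and all: "\<And>(A :: ('a set + real) tpms) \<alpha>. coalg A \<alpha> \<Longrightarrow>
        \<exists>h. coalg_morph A \<alpha> X e h" using F unfolding final_for_def by blast+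
  have X: "is_tpms X" and eim: "e ` tcarrier X \<subseteq> tcarrier (Fobj X)" and eT: "e (pT X) = pT (Fobj X)"
    using cX unfolding coalg_def lip_morph_def by blast+
  note f = tpms_facts[OF X]
  obtain K where HK: "\<forall>x\<in>tcarrier X. \<forall>y\<in>tcarrier X. tdist (Fobj X) (e x) (e y) \<le> K * tdist X x y"
    using cX unfolding coalg_def lip_morph_def by blast
  define K0 where "K0 = max K 1"
  define r where "r = 1 / (4 * K0)"
  have K0: "K0 \<ge> 1" "K \<le> K0" unfolding K0_def by auto
  have r: "0 < r" "r \<le> 1/4" unfolding r_def using K0 by (auto simp: field_simps)
  let ?A = "Atp r :: ('a set + real) tpms"
  obtain h where hm: "coalg_morph ?A (Aal r) X e h" using all[OF Atp_coalg[OF r]] by blast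
  have him: "h ` tcarrier ?A \<subseteq> tcarrier X" and hT: "h (Inr 0) = pT X" and hL: "h (Inr 1) = pL X"
    and hcomm: "\<forall>x\<in>tcarrier ?A. e (h x) = Fmap X h (Aal r x)"
    using hm unfolding coalg_morph_def lip_morph_def by (auto simp: Atp_def)
  obtain Kh where HKh: "\<forall>x\<in>tcarrier ?A. \<forall>y\<in>tcarrier ?A. tdist X (h x) (h y) \<le> Kh * tdist ?A x y"
    using hm unfolding coalg_morph_def lip_morph_def by blast
  define z where "z n = h (Inr (r ^ n))" for n
  have rn: "r ^ n \<in> SS r" for n unfolding SS_def by auto
  have rnc: "Inr (r ^ n) \<in> tcarrier ?A" for n using rn by (simp add: Atp_carrier)
  have zc: "z n \<in> tcarrier X" for n using him rnc unfolding z_def by blast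
  have rle: "r ^ Suc n \<le> r" for n
  proof -
    have "r ^ n \<le> 1" using r by (simp add: power_le_one)
    then show ?thesis using r by (simp add: mult_left_le)
  qed
  have step: "tdist X (z n) (pT X) / 2 \<le> K0 * tdist X (z (Suc n)) (pT X)" for n
  proof -
    have q: "r ^ Suc n \<le> 1/4" using rle[of n] r by linarith
    have ne: "r ^ Suc n \<noteq> 1" "r ^ Suc n \<noteq> 2" using q by linarith+
    have al: "Aal r (Inr (r ^ Suc n)) = tens ?A Ma (Inr (r ^ n))"
      using ne r by (simp add: Aal_def)
    have ez: "e (z (Suc n)) = Fmap X h (tens ?A Ma (Inr (r ^ n)))"
      using hcomm rnc[of "Suc n"] al unfolding z_def by simp
    have mem: "(Ma, Inr (r ^ n)) \<in> tens ?A Ma (Inr (r ^ n))"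
      unfolding tens_def using refl_glue[of "(Ma, Inr (r ^ n))" ?A] rnc[of n]
      by (simp add: prod_carrier_def)
    have "(Ma, z n) \<in> map_prod id h ` tens ?A Ma (Inr (r ^ n))"
      unfolding z_def by (rule image_eqI[OF _ mem]) simp
    moreover have "((Ma, z n), (Ma, z n)) \<in> glue_eq X"
      using refl_glue[of "(Ma, z n)" X] zc[of n] by (simp add: prod_carrier_def)
    ultimately have zin: "(Ma, z n) \<in> e (z (Suc n))" unfolding ez Fmap_def by (rule ImageI[rotated])
    have "e (z (Suc n)) \<in> prod_carrier X // glue_eq X"
      using eim zc[of "Suc n"] by (auto simp: Fobj_def)
    then obtain p where p: "p \<in> prod_carrier X" "e (z (Suc n)) = glue_eq X `` {p}"
      by (auto elim: quotientE)
    have "tdist X (z n) (pT X) / 2 \<le> quot_dist (prod_dist X) (glue_eq X) (prod_carrier X) (e (z (Suc n))) (tens X Ma (pT X))"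
      using lower[OF X zc[of n] p(1)] zin p(2) by simp
    also have "\<dots> = tdist (Fobj X) (e (z (Suc n))) (e (pT X))"
      using eT by (simp add: Fobj_def)
    also have "\<dots> \<le> K * tdist X (z (Suc n)) (pT X)"
      using HK zc[of "Suc n"] f(1) by blast
    also have "\<dots> \<le> K0 * tdist X (z (Suc n)) (pT X)"
      using K0 f(7)[OF zc[of "Suc n"] f(1)] by (simp add: mult_right_mono)
    finally show ?thesis .
  qed
  define c where "c = 2 * r"
  have c: "1 / (2 * K0) = c" "0 < c" unfolding c_def r_def using K0 by (auto simp: field_simps)
  have lowb: "c ^ n \<le> tdist X (z n) (pT X)" for n
  proof (induction n)
    case 0 then show ?case using hL f(4) unfolding z_def by simp
  next
    case (Suc n)
    have st: "(tdist X (z n) (pT X) / 2) / K0 \<le> tdist X (z (Suc n)) (pT X)"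
      using step[of n] K0 by (simp add: pos_divide_le_eq mult.commute)
    have "c ^ Suc n = c * c ^ n" by simp
    also have "\<dots> \<le> c * tdist X (z n) (pT X)" using mult_left_mono[OF Suc] c(2) by simp
    also have "\<dots> = (tdist X (z n) (pT X) / 2) / K0" unfolding c(1)[symmetric] by simp
    also have "\<dots> \<le> tdist X (z (Suc n)) (pT X)" using st .
    finally show ?case .
  qed
  have upb: "tdist X (z n) (pT X) \<le> Kh * r ^ n" for n
  proof -
    have c0: "Inr 0 \<in> tcarrier ?A" by (simp add: Atp_carrier SS_def)
    have "r ^ n \<le> 1" using r by (simp add: power_le_one)
    moreover have "0 < r ^ n" using r by simp
    ultimately have "tdist ?A (Inr (r ^ n)) (Inr 0) = r ^ n" by (simp add: Atp_dist dd_def)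
    moreover have "tdist X (h (Inr (r ^ n))) (h (Inr 0)) \<le> Kh * tdist ?A (Inr (r ^ n)) (Inr 0)"
      using HKh rnc[of n] c0 by blast
    ultimately show ?thesis using hT unfolding z_def by simp
  qed
  obtain n :: nat where n: "Kh < real n" using reals_Archimedean2 by blast
  have eq: "c ^ n = 2 ^ n * r ^ n" unfolding c_def by (simp add: power_mult_distrib)
  have rpos: "0 < r ^ n" using r by simp
  have "2 ^ n * r ^ n \<le> Kh * r ^ n" using lowb[of n] upb[of n] eq by simp
  then have "2 ^ n \<le> Kh" using mult_le_cancel_right_pos[OF rpos] by blast
  moreover have "real n < 2 ^ n" by simp
  ultimately show False using n by simp
qed

end
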